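(* Let $G$ be a cograph with (canonical) cotree $T_G$, and let $c$ be an inner vertex of $T_G$ with label $+$. Then the cograph $T_G(c)$ satisfies property $\mathcal{P}$ if and only if $c$ has at least two children in $T_G$ and either (i) there exist at least two children of $c$ in $T_G$ each of which is either a leaf or a vertex with label $\mathcal{R}$, or (ii) one of the children of $c$ is a vertex $u$ with label $\mathcal{R}$ such that $T_G(u)$ is the disjoint union of two complete graphs.
   Context: All graphs are finite and simple. For a graph $H$ and $v\in V(H)$, $N_H[v]$ denotes the closed neighbourhood of $v$. A set $D\subseteq V(H)$ is dominating if every vertex outside $D$ has a neighbour in $D$; $\gamma(H)$ is the minimum size of a dominating set. A dominating set $S$ is a secure dominating set if for every $x\in V(H)\setminus S$ there is a neighbour $y\in S$ of $x$ such that $(S\cup\{x\})\setminus\{y\}$ is dominating; $\gamma_s(H)$ is the minimum size of a secure dominating set. The join $G_1+G_2$ of disjoint graphs is their disjoint union together with all edges between $V(G_1)$ and $V(G_2)$. Cographs are defined recursively: $K_1$ is a cograph; the complement of a cograph is a cograph; the disjoint union of $k\ge 2$ cographs is a cograph. A cograph $G$ is represented by its cotree $T_G$: a rooted tree whose leaves are the vertices of $G$ and whose inner vertices are labelled $\cup$ or $+$, where the graph corresponding to an inner vertex is the disjoint union (label $\cup$) or the join (label $+$) of the graphs corresponding to its children; in this cotree the labels alternate, i.e. every child of a $\cup$-vertex is a leaf or a $+$-vertex, and every child of a $+$-vertex is a leaf or a $\cup$-vertex. For a vertex $v$ of $T_G$, $T_G(v)$ denotes the subgraph of $G$ induced by the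 leaves of the subtree of $T_G$ rooted at $v$. A vertex $u$ of $T_G$ has label $\mathcal{R}$ if (a) $u$ has label $\cup$, (b) $u$ has exactly two children $x,y$ in $T_G$, (c) $\gamma(T_G(x))=1$, and (d) $\gamma_s(T_G(y))=1$. A cograph $H$ which is the join of cographs $H_1,\dots,H_\ell$ with $\ell\ge 2$ satisfies property $\mathcal{P}$ if there exist two distinct vertices $x,y\in V(H)$ such that $\{x,y\}$ is a dominating set of $H$ and each of $V(H)\setminus N_H[x]$ and $V(H)\setminus N_H[y]$ is either empty or a clique (a set of vertices inducing a complete graph). *)

theory Defs
  imports Main
begin

text \<open>A (finite simple) graph is given by a vertex set V and an adjacency
relation adj; only the values of adj on V matter.\<close>

definition closed_nbhd :: "'a set \<Rightarrow> ('a \<Rightarrow> 'a \<Rightarrow> bool) \<Rightarrow> 'a \<Rightarrow> 'a set" where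
  "closed_nbhd V adj v = insert v {u \<in> V. adj v u}"

definition dominating :: "'a set \<Rightarrow> ('a \<Rightarrow> 'a \<Rightarrow> bool) \<Rightarrow> 'a set \<Rightarrow> bool" where
  "dominating V adj D \<longleftrightarrow> D \<subseteq> V \<and> (\<forall>x \<in> V - D. \<exists>y \<in> D. adj x y)"

definition domination_number :: "'a set \<Rightarrow> ('a \<Rightarrow> 'a \<Rightarrow> bool) \<Rightarrow> nat" where
  "domination_number V adj = Min {card D | D. dominating V adj D}"

definition secure_dominating :: "'a set \<Rightarrow> ('a \<Rightarrow> 'a \<Rightarrow> bool) \<Rightarrow> 'a set \<Rightarrow> bool" where
  "secure_dominating V adj S \<longleftrightarrow> dominating V adj S \<and>
     (\<forall>x \<in> V - S. \<exists>y \<in> S. adj x y \<and> dominating V adj ((S \<union> {x}) - {y}))"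

definition secure_domination_number :: "'a set \<Rightarrow> ('a \<Rightarrow> 'a \<Rightarrow> bool) \<Rightarrow> nat" where
  "secure_domination_number V adj = Min {card S | S. secure_dominating V adj S}"

definition is_clique :: "'a set \<Rightarrow> ('a \<Rightarrow> 'a \<Rightarrow> bool) \<Rightarrow> 'a set \<Rightarrow> bool" where
  "is_clique V adj C \<longleftrightarrow> C \<subseteq> V \<and> (\<forall>a \<in> C. \<forall>b \<in> C. a \<noteq> b \<longrightarrow> adj a b)"

definition two_cliques_union :: "'a set \<Rightarrow> ('a \<Rightarrow> 'a \<Rightarrow> bool) \<Rightarrow> bool" where
  "two_cliques_union V adj \<longleftrightarrow> (\<exists>A B. A \<noteq> {} \<and> B \<noteq> {} \<and> A \<inter> B = {} \<and> A \<union> B = V \<and>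
      is_clique V adj A \<and> is_clique V adj B \<and> (\<forall>a \<in> A. \<forall>b \<in> B. \<not> adj a b))"

inductive cograph :: "'a set \<Rightarrow> ('a \<Rightarrow> 'a \<Rightarrow> bool) \<Rightarrow> bool" where
  single: "\<not> adj v v \<Longrightarrow> cograph {v} adj"
| compl: "cograph V adj \<Longrightarrow> (\<forall>x \<in> V. \<forall>y \<in> V. adj' x y \<longleftrightarrow> x \<noteq> y \<and> \<not> adj x y)
           \<Longrightarrow> cograph V adj'"
| disj_union: "length Vs \<ge> 2 \<Longrightarrow> (\<forall>i < length Vs. Vs ! i \<noteq> {} \<and> cograph (Vs ! i) adj)
           \<Longrightarrow> (\<forall>i < length Vs. \<forall>j < length Vs. i \<noteq> j \<longrightarrow> Vs ! i \<inter> Vs ! j = {})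
           \<Longrightarrow> (\<forall>i < length Vs. \<forall>j < length Vs. i \<noteq> j \<longrightarrow>
                  (\<forall>x \<in> Vs ! i. \<forall>y \<in> Vs ! j. \<not> adj x y))
           \<Longrightarrow> cograph (\<Union>(set Vs)) adj"

definition is_join_of_cographs :: "'a set \<Rightarrow> ('a \<Rightarrow> 'a \<Rightarrow> bool) \<Rightarrow> bool" where
  "is_join_of_cographs V adj \<longleftrightarrow> (\<exists>Vs. length Vs \<ge> 2 \<and> \<Union>(set Vs) = V \<and>
      (\<forall>i < length Vs. Vs ! i \<noteq> {} \<and> cograph (Vs ! i) adj) \<and>
      (\<forall>i < length Vs. \<forall>j < length Vs. i \<noteq> j \<longrightarrow> Vs ! i \<inter> Vs ! j = {}) \<and>
      (\<forall>i < length Vs. \<forall>j < length Vs. i \<noteq> j \<longrightarrow> (\<forall>x \<in> Vs ! i. \<forall>y \<in> Vs ! j. adj x y)))"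

definition property_P :: "'a set \<Rightarrow> ('a \<Rightarrow> 'a \<Rightarrow> bool) \<Rightarrow> bool" where
  "property_P V adj \<longleftrightarrow> is_join_of_cographs V adj \<and>
     (\<exists>x \<in> V. \<exists>y \<in> V. x \<noteq> y \<and> dominating V adj {x, y} \<and>
        (V - closed_nbhd V adj x = {} \<or> is_clique V adj (V - closed_nbhd V adj x)) \<and>
        (V - closed_nbhd V adj y = {} \<or> is_clique V adj (V - closed_nbhd V adj y)))"

text \<open>Inner vertices: Node True cs has label +, Node False cs has label \<union>.\<close>
datatype 'a cotree = Leaf 'a | Node bool "'a cotree list"

fun leaves :: "'a cotree \<Rightarrow> 'a set" where
  "leaves (Leaf v) = {v}"
| "leaves (Node b cs) = (\<Union>c \<in> set cs. leaves c)"

text \<open>Adjacency in the graph T(v) represented by a (sub)cotree.\<close>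
fun cadj :: "'a cotree \<Rightarrow> 'a \<Rightarrow> 'a \<Rightarrow> bool" where
  "cadj (Leaf v) x y = False"
| "cadj (Node b cs) x y = ((\<exists>c \<in> set cs. cadj c x y) \<or>
     (b \<and> (\<exists>i < length cs. \<exists>j < length cs. i \<noteq> j \<and> x \<in> leaves (cs ! i) \<and> y \<in> leaves (cs ! j))))"

fun is_join_node :: "'a cotree \<Rightarrow> bool" where
  "is_join_node (Leaf v) = False"
| "is_join_node (Node b cs) = b"

fun is_union_node :: "'a cotree \<Rightarrow> bool" where
  "is_union_node (Leaf v) = False"
| "is_union_node (Node b cs) = (\<not> b)"

fun is_leaf :: "'a cotree \<Rightarrow> bool" where
  "is_leaf (Leaf v) = True"
| "is_leaf (Node b cs) = False"

fun children :: "'a cotree \<Rightarrow> 'a cotree list" where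
  "children (Leaf v) = []"
| "children (Node b cs) = cs"

text \<open>Canonical cotree: every inner vertex has at least two children, labels alternate,
and the leaf sets of distinct children are disjoint (so the leaves are distinct vertices).\<close>
fun canonical_cotree :: "'a cotree \<Rightarrow> bool" where
  "canonical_cotree (Leaf v) = True"
| "canonical_cotree (Node b cs) = (length cs \<ge> 2 \<and>
     (\<forall>c \<in> set cs. canonical_cotree c \<and> (is_leaf c \<or> is_join_node c \<noteq> b)) \<and>
     (\<forall>i < length cs. \<forall>j < length cs. i \<noteq> j \<longrightarrow> leaves (cs ! i) \<inter> leaves (cs ! j) = {}))"

text \<open>All vertices of the cotree (each vertex identified with the subtree rooted at it).\<close>
fun subtrees :: "'a cotree \<Rightarrow> 'a cotree set" where
  "subtrees (Leaf v) = {Leaf v}"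
| "subtrees (Node b cs) = insert (Node b cs) (\<Union>c \<in> set cs. subtrees c)"

abbreviation gamma_T :: "'a cotree \<Rightarrow> nat" where
  "gamma_T t \<equiv> domination_number (leaves t) (cadj t)"

abbreviation gamma_s_T :: "'a cotree \<Rightarrow> nat" where
  "gamma_s_T t \<equiv> secure_domination_number (leaves t) (cadj t)"

definition label_R :: "'a cotree \<Rightarrow> bool" where
  "label_R u \<longleftrightarrow> is_union_node u \<and> length (children u) = 2 \<and>
     (\<exists>i < 2. \<exists>j < 2. i \<noteq> j \<and> gamma_T (children u ! i) = 1 \<and> gamma_s_T (children u ! j) = 1)"

end

theory Submission
  imports Defs
begin

lemma finite_leaves: "finite (leaves t)"
  by (induction t) auto

lemma canon_leaves_ne: "canonical_cotree t \<Longrightarrow> leaves t \<noteq> {}"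
proof (induction t)
  case (Leaf x) then show ?case by simp
next
  case (Node b cs)
  then have "cs ! 0 \<in> set cs" by (auto intro!: nth_mem)
  with Node show ?case by auto
qed

lemma cadj_leaves: "cadj t x y \<Longrightarrow> x \<in> leaves t \<and> y \<in> leaves t"
  by (induction t) (auto intro: nth_mem)

lemma cadj_sym: "cadj t x y = cadj t y x"
  by (induction t) auto

lemma canon_sub: "canonical_cotree t \<Longrightarrow> s \<in> subtrees t \<Longrightarrow> canonical_cotree s"
  by (induction t) auto

lemma canon_disj: "canonical_cotree (Node b cs) \<Longrightarrow> c1 \<in> set cs \<Longrightarrow> c2 \<in> set cs \<Longrightarrow> c1 \<noteq> c2
  \<Longrightarrow> leaves c1 \<inter> leaves c2 = {}"
  by (auto simp: in_set_conv_nth) 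

lemma canon_distinct: "canonical_cotree (Node b cs) \<Longrightarrow> distinct cs"
  unfolding distinct_conv_nth
  by (metis Int_absorb canon_leaves_ne canonical_cotree.simps(2) nth_mem)

lemma cadj_irrefl: "canonical_cotree t \<Longrightarrow> \<not> cadj t x x"
proof (induction t)
  case (Leaf v) then show ?case by simp
next
  case (Node b cs)
  have "\<not> (\<exists>c\<in>set cs. cadj c x x)" using Node by auto
  moreover have "\<not> (\<exists>i < length cs. \<exists>j < length cs. i \<noteq> j \<and> x \<in> leaves (cs ! i) \<and> x \<in> leaves (cs ! j))"
    using Node.prems by (auto simp: disjoint_iff)
  ultimately show ?case by simp
qed

lemma same_child:
  assumes "canonical_cotree (Node b cs)" "c1 \<in> set cs" "c2 \<in> set cs" "a \<in> leaves c1" "a \<in> leaves c2"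
  shows "c1 = c2"
proof (rule ccontr)
  assume "c1 \<noteq> c2"
  then have "leaves c1 \<inter> leaves c2 = {}" by (rule canon_disj[OF assms(1-3)])
  with assms(4,5) show False by blast
qed

lemma cadj_same: "canonical_cotree (Node b cs) \<Longrightarrow> ci \<in> set cs \<Longrightarrow> a \<in> leaves ci \<Longrightarrow> z \<in> leaves ci
  \<Longrightarrow> cadj (Node b cs) a z = cadj ci a z"
proof
  assume h: "canonical_cotree (Node b cs)" "ci \<in> set cs" "a \<in> leaves ci" "z \<in> leaves ci"
    "cadj (Node b cs) a z"
  show "cadj ci a z"
  proof (cases "\<exists>c\<in>set cs. cadj c a z")
    case True
    then obtain c' where c': "c' \<in> set cs" "cadj c' a z" by blast
    have "a \<in> leaves c'" using cadj_leaves[OF c'(2)] by simp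
    then have "c' = ci" using same_child[OF h(1) c'(1) h(2) _ h(3)] by simp
    then show ?thesis using c'(2) by simp
  next
    case False
    then obtain i j where ij: "i < length cs" "j < length cs" "i \<noteq> j" "a \<in> leaves (cs!i)" "z \<in> leaves (cs!j)"
      using h(5) by auto
    have "cs!i = ci" using same_child[OF h(1) nth_mem[OF ij(1)] h(2) ij(4) h(3)] .
    moreover have "cs!j = ci" using same_child[OF h(1) nth_mem[OF ij(2)] h(2) ij(5) h(4)] .
    ultimately have "cs!i = cs!j" by simp
    then show ?thesis using canon_distinct[OF h(1)] ij(1-3) by (simp add: nth_eq_iff_index_eq)
  qed
qed auto

lemma cadj_diff: "canonical_cotree (Node b cs) \<Longrightarrow> ci \<in> set cs \<Longrightarrow> cj \<in> set cs \<Longrightarrow> ci \<noteq> cj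
  \<Longrightarrow> a \<in> leaves ci \<Longrightarrow> z \<in> leaves cj \<Longrightarrow> cadj (Node b cs) a z = b"
proof
  assume h: "canonical_cotree (Node b cs)" "ci \<in> set cs" "cj \<in> set cs" "ci \<noteq> cj"
    "a \<in> leaves ci" "z \<in> leaves cj"
  {
    assume "cadj (Node b cs) a z"
    moreover have "\<not> (\<exists>c\<in>set cs. cadj c a z)"
    proof
      assume "\<exists>c\<in>set cs. cadj c a z"
      then obtain c' where c': "c' \<in> set cs" "cadj c' a z" by blast
      have "c' = ci" using same_child[OF h(1) c'(1) h(2) _ h(5)] cadj_leaves[OF c'(2)] by simp
      moreover have "c' = cj" using same_child[OF h(1) c'(1) h(3) _ h(6)] cadj_leaves[OF c'(2)] by simp
      ultimately show False using h(4) by simp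
    qed
    ultimately show b by auto
  }
  assume b
  obtain i where i: "i < length cs" "cs!i = ci" using h(2) by (meson in_set_conv_nth)
  obtain j where j: "j < length cs" "cs!j = cj" using h(3) by (meson in_set_conv_nth)
  have "i \<noteq> j" using i j h(4) by auto
  then show "cadj (Node b cs) a z" using i j h(5,6) \<open>b\<close> by auto
qed

lemma min_card_1:
  assumes "finite V" "P V" "\<And>D. P D \<Longrightarrow> D \<subseteq> V \<and> D \<noteq> {}"
  shows "Min {card D | D. P D} = 1 \<longleftrightarrow> (\<exists>v. P {v})"
proof -
  let ?S = "{card D | D. P D}"
  have sub: "?S \<subseteq> {..card V}"
  proof
    fix n assume "n \<in> ?S"
    then obtain D where D: "P D" "n = card D" by blast
    then have "D \<subseteq> V" using assms(3) by blast
    then have "card D \<le> card V" using assms(1) by (rule card_mono[rotated])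
    then show "n \<in> {..card V}" using D by simp
  qed
  have fin: "finite ?S" using sub finite_subset by blast
  have ne: "?S \<noteq> {}" using assms(2) by blast
  have pos: "\<And>n. n \<in> ?S \<Longrightarrow> n \<ge> 1"
  proof -
    fix n assume "n \<in> ?S"
    then obtain D where D: "P D" "n = card D" by blast
    then have "D \<subseteq> V" "D \<noteq> {}" using assms(3) by auto
    then have "finite D" using assms(1) finite_subset by blast
    with \<open>D \<noteq> {}\<close> D(2) show "n \<ge> 1" by (simp add: Suc_leI card_gt_0_iff)
  qed
  show ?thesis
  proof
    assume "Min ?S = 1"
    then have "1 \<in> ?S" using Min_in[OF fin ne] by simp
    then have "\<exists>D. 1 = card D \<and> P D" by (simp only: mem_Collect_eq)
    then obtain D where D: "P D" "card D = 1" by (elim exE conjE) simp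
    from D(2) obtain v where "D = {v}" by (rule card_1_singletonE)
    then show "\<exists>v. P {v}" using D(1) by blast
  next
    assume "\<exists>v. P {v}"
    then obtain v where "P {v}" by blast
    then have "card {v} \<in> ?S" by blast
    then have "1 \<in> ?S" by simp
    then have "Min ?S \<le> 1" using fin by (simp add: Min_le)
    moreover have "Min ?S \<ge> 1" using pos Min_in[OF fin ne] by blast
    ultimately show "Min ?S = 1" by simp
  qed
qed

lemma dom_number_1:
  assumes "finite V" "V \<noteq> {}"
  shows "domination_number V adj = 1 \<longleftrightarrow> (\<exists>v\<in>V. \<forall>z\<in>V. z \<noteq> v \<longrightarrow> adj z v)"
proof -
  have "domination_number V adj = 1 \<longleftrightarrow> (\<exists>v. dominating V adj {v})"
    unfolding domination_number_def
    by (rule min_card_1) (use assms in \<open>auto simp: dominating_def\<close>)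
  also have "\<dots> \<longleftrightarrow> (\<exists>v\<in>V. \<forall>z\<in>V. z \<noteq> v \<longrightarrow> adj z v)"
    by (auto simp: dominating_def)
  finally show ?thesis .
qed

lemma secdom_number_1:
  assumes "finite V" "V \<noteq> {}"
  shows "secure_domination_number V adj = 1 \<longleftrightarrow> (\<forall>x\<in>V. \<forall>z\<in>V. z \<noteq> x \<longrightarrow> adj z x)"
proof -
  have "secure_domination_number V adj = 1 \<longleftrightarrow> (\<exists>v. secure_dominating V adj {v})"
    unfolding secure_domination_number_def
    by (rule min_card_1) (use assms in \<open>auto simp: secure_dominating_def dominating_def\<close>)
  also have "\<dots> \<longleftrightarrow> (\<forall>x\<in>V. \<forall>z\<in>V. z \<noteq> x \<longrightarrow> adj z x)"
  proof
    assume "\<exists>v. secure_dominating V adj {v}"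
    then obtain v where v: "secure_dominating V adj {v}" by blast
    show "\<forall>x\<in>V. \<forall>z\<in>V. z \<noteq> x \<longrightarrow> adj z x"
    proof (intro ballI impI)
      fix x z assume "x \<in> V" "z \<in> V" "z \<noteq> x"
      show "adj z x"
      proof (cases "x = v")
        case True then show ?thesis using v \<open>z \<in> V\<close> \<open>z \<noteq> x\<close>
          by (auto simp: secure_dominating_def dominating_def)
      next
        case False
        then have xV: "x \<in> V - {v}" using \<open>x \<in> V\<close> by simp
        then have "\<exists>y\<in>{v}. adj x y \<and> dominating V adj (({v} \<union> {x}) - {y})"
          using v unfolding secure_dominating_def by blast
        then have "dominating V adj (({v} \<union> {x}) - {v})" by simp
        moreover have "({v} \<union> {x}) - {v} = {x}" using False by auto
        ultimately have "dominating V adj {x}" by simp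
        then show ?thesis using \<open>z \<in> V\<close> \<open>z \<noteq> x\<close> by (auto simp: dominating_def)
      qed
    qed
  next
    assume h: "\<forall>x\<in>V. \<forall>z\<in>V. z \<noteq> x \<longrightarrow> adj z x"
    obtain v where "v \<in> V" using assms by blast
    have "secure_dominating V adj {v}"
      unfolding secure_dominating_def
    proof (intro conjI ballI)
      show "dominating V adj {v}" using h \<open>v \<in> V\<close> by (auto simp: dominating_def)
      fix x assume "x \<in> V - {v}"
      then have "({v} \<union> {x}) - {v} = {x}" by auto
      moreover have "dominating V adj {x}" using h \<open>x \<in> V - {v}\<close> by (auto simp: dominating_def)
      ultimately show "\<exists>y\<in>{v}. adj x y \<and> dominating V adj ({v} \<union> {x} - {y})"
        using h \<open>x \<in> V - {v}\<close> \<open>v \<in> V\<close> by auto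
    qed
    then show "\<exists>v. secure_dominating V adj {v}" by blast
  qed
  finally show ?thesis .
qed

lemma cograph_irrefl: "cograph V adj \<Longrightarrow> x \<in> V \<Longrightarrow> \<not> adj x x"
  by (induction V adj arbitrary: x rule: cograph.induct) (auto simp: in_set_conv_nth)

lemma cograph_transfer:
  assumes "cograph V adj" "\<forall>x\<in>V. \<forall>y\<in>V. adj2 x y = adj x y"
  shows "cograph V adj2"
proof -
  have c1: "cograph V (\<lambda>x y. x \<noteq> y \<and> \<not> adj x y)"
    by (rule cograph.compl[OF assms(1)]) simp
  show ?thesis
    by (rule cograph.compl[OF c1]) (use assms cograph_irrefl[OF assms(1)] in auto)
qed

lemma cadj_idx:
  assumes can: "canonical_cotree (Node b cs)" and ij: "i < length cs" "j < length cs" "i \<noteq> j"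
    and xy: "x \<in> leaves (cs ! i)" "y \<in> leaves (cs ! j)"
  shows "cadj (Node b cs) x y = b"
proof -
  have "cs ! i \<noteq> cs ! j" using canon_distinct[OF can] ij by (simp add: nth_eq_iff_index_eq)
  then show ?thesis using cadj_diff[OF can nth_mem[OF ij(1)] nth_mem[OF ij(2)] _ xy] by simp
qed

lemma agree_child:
  assumes can: "canonical_cotree (Node b cs)" and ci: "ci \<in> set cs"
  shows "\<forall>x\<in>leaves ci. \<forall>y\<in>leaves ci. cadj (Node b cs) x y = cadj ci x y"
  using cadj_same[OF can ci] by blast

lemma canon_cograph: "canonical_cotree t \<Longrightarrow> cograph (leaves t) (cadj t)"
proof (induction t)
  case (Leaf v) then show ?case by (auto intro: cograph.single)
next
  case (Node b cs)
  have can: "canonical_cotree (Node b cs)" by fact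
  have L: "leaves (Node b cs) = \<Union>(set (map leaves cs))" by simp
  have len: "2 \<le> length (map leaves cs)" using can by simp
  have disj: "\<forall>i<length (map leaves cs). \<forall>j<length (map leaves cs). i \<noteq> j \<longrightarrow> map leaves cs ! i \<inter> map leaves cs ! j = {}"
    using can by simp
  have cross: "\<forall>i<length (map leaves cs). \<forall>j<length (map leaves cs). i \<noteq> j \<longrightarrow>
          (\<forall>x\<in>map leaves cs ! i. \<forall>y\<in>map leaves cs ! j. cadj (Node b cs) x y = b)"
    using cadj_idx[OF can] by simp
  show ?case
  proof (cases b)
    case False
    show ?thesis unfolding L
    proof (rule cograph.disj_union[OF len _ disj])
      show "\<forall>i<length (map leaves cs). map leaves cs ! i \<noteq> {} \<and> cograph (map leaves cs ! i) (cadj (Node b cs))"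
      proof (intro allI impI conjI)
        fix i assume i: "i < length (map leaves cs)"
        then have ci: "cs ! i \<in> set cs" by simp
        then have cc: "canonical_cotree (cs ! i)" using can by simp
        show "map leaves cs ! i \<noteq> {}" using canon_leaves_ne[OF cc] i by simp
        have "cograph (leaves (cs ! i)) (cadj (Node b cs))"
          using cograph_transfer[OF Node.IH[OF ci cc] agree_child[OF can ci]] .
        then show "cograph (map leaves cs ! i) (cadj (Node b cs))" using i by simp
      qed
      show "\<forall>i<length (map leaves cs). \<forall>j<length (map leaves cs). i \<noteq> j \<longrightarrow>
          (\<forall>x\<in>map leaves cs ! i. \<forall>y\<in>map leaves cs ! j. \<not> cadj (Node b cs) x y)"
        using cross False by simp
    qed
  next
    case True
    let ?A = "\<lambda>x y. x \<noteq> y \<and> \<not> cadj (Node b cs) x y"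
    have "cograph (\<Union>(set (map leaves cs))) ?A"
    proof (rule cograph.disj_union[OF len _ disj])
      show "\<forall>i<length (map leaves cs). map leaves cs ! i \<noteq> {} \<and> cograph (map leaves cs ! i) ?A"
      proof (intro allI impI conjI)
        fix i assume i: "i < length (map leaves cs)"
        then have ci: "cs ! i \<in> set cs" by simp
        then have cc: "canonical_cotree (cs ! i)" using can by simp
        show "map leaves cs ! i \<noteq> {}" using canon_leaves_ne[OF cc] i by simp
        have "cograph (leaves (cs ! i)) (\<lambda>x y. x \<noteq> y \<and> \<not> cadj (cs ! i) x y)"
          by (rule cograph.compl[OF Node.IH[OF ci cc]]) simp
        moreover have "\<forall>x\<in>leaves (cs ! i). \<forall>y\<in>leaves (cs ! i). ?A x y = (x \<noteq> y \<and> \<not> cadj (cs ! i) x y)"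
          using agree_child[OF can ci] by simp
        ultimately have "cograph (leaves (cs ! i)) ?A" by (rule cograph_transfer)
        then show "cograph (map leaves cs ! i) ?A" using i by simp
      qed
      show "\<forall>i<length (map leaves cs). \<forall>j<length (map leaves cs). i \<noteq> j \<longrightarrow>
          (\<forall>x\<in>map leaves cs ! i. \<forall>y\<in>map leaves cs ! j. \<not> ?A x y)"
        using cross True by simp
    qed
    then have "cograph (leaves (Node b cs)) ?A" unfolding L .
    then show ?thesis
      by (rule cograph.compl) (use cadj_irrefl[OF can] in auto)
  qed
qed

abbreviation NN :: "'a cotree \<Rightarrow> 'a \<Rightarrow> 'a set" where
  "NN t x \<equiv> leaves t - closed_nbhd (leaves t) (cadj t) x"

lemma memNN: "z \<in> NN t x \<longleftrightarrow> z \<in> leaves t \<and> z \<noteq> x \<and> \<not> cadj t x z"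
  by (auto simp: closed_nbhd_def)

lemma NN_node:
  assumes can: "canonical_cotree (Node b cs)" and ci: "ci \<in> set cs" and x: "x \<in> leaves ci"
  shows "NN (Node b cs) x = (if b then {} else leaves (Node b cs) - leaves ci) \<union> NN ci x"
proof (rule set_eqI)
  fix z
  let ?t = "Node b cs"
  have ci_sub: "leaves ci \<subseteq> leaves ?t" using ci by auto
  show "z \<in> NN ?t x \<longleftrightarrow> z \<in> (if b then {} else leaves ?t - leaves ci) \<union> NN ci x"
  proof (cases "z \<in> leaves ?t")
    case True
    then obtain cj where cj: "cj \<in> set cs" "z \<in> leaves cj" by auto
    show ?thesis
    proof (cases "cj = ci")
      case True
      have zc: "z \<in> leaves ci" using cj True by simp
      have eq: "cadj ?t x z = cadj ci x z" using cadj_same[OF can ci x zc] .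
      show ?thesis by (simp only: Un_iff memNN) (use eq zc ci_sub in auto)
    next
      case False
      have zn: "z \<notin> leaves ci"
        using same_child[OF can cj(1) ci _ ] cj(2) False by blast
      have eq: "cadj ?t x z = b" using cadj_diff[OF can ci cj(1) False[symmetric] x cj(2)] .
      have "z \<noteq> x" using zn x by blast
      show ?thesis by (simp only: Un_iff memNN) (use eq zn \<open>z \<in> leaves ?t\<close> \<open>z \<noteq> x\<close> in auto)
    qed
  next
    case False
    then show ?thesis by (simp only: Un_iff memNN) (use ci_sub in auto)
  qed
qed

lemma clique_sub:
  assumes can: "canonical_cotree (Node b cs)" and ci: "ci \<in> set cs" and C: "C \<subseteq> leaves ci"
  shows "is_clique (leaves (Node b cs)) (cadj (Node b cs)) C \<longleftrightarrow> is_clique (leaves ci) (cadj ci) C"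
proof -
  have ci_sub: "leaves ci \<subseteq> leaves (Node b cs)" using ci by auto
  have "\<forall>a\<in>C. \<forall>b'\<in>C. cadj (Node b cs) a b' = cadj ci a b'"
    using agree_child[OF can ci] C by blast
  then show ?thesis unfolding is_clique_def using C ci_sub by blast
qed

lemma clique_mono: "is_clique V adj C \<Longrightarrow> C' \<subseteq> C \<Longrightarrow> is_clique V adj C'"
  unfolding is_clique_def by blast

lemma leaves_child: "ci \<in> set cs \<Longrightarrow> leaves ci \<subseteq> leaves (Node b cs)"
  by auto

lemma union_good:
  assumes can: "canonical_cotree (Node False ds)" and dk: "dk \<in> set ds" and x: "x \<in> leaves dk"
    and cl: "is_clique (leaves (Node False ds)) (cadj (Node False ds)) (NN (Node False ds) x)"
  shows "\<exists>dl. set ds = {dk, dl} \<and> dl \<noteq> dk \<and> NN dk x = {} \<and> is_clique (leaves dl) (cadj dl) (leaves dl)"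
proof -
  let ?u = "Node False ds"
  have dist: "distinct ds" using canon_distinct[OF can] .
  have NNu: "NN ?u x = (leaves ?u - leaves dk) \<union> NN dk x"
    using NN_node[OF can dk x] by (simp only: if_False)
  have clq: "\<And>a b. a \<in> NN ?u x \<Longrightarrow> b \<in> NN ?u x \<Longrightarrow> a \<noteq> b \<Longrightarrow> cadj ?u a b"
    using cl unfolding is_clique_def by blast
  obtain dl where dl: "dl \<in> set ds" "dl \<noteq> dk"
  proof -
    have "card (set ds) \<ge> 2" using can distinct_card[OF dist] by simp
    then have "set ds \<noteq> {dk}" by auto
    then show ?thesis using that dk by blast
  qed
  have cdl: "canonical_cotree dl" using can dl(1) by simp
  obtain w where w: "w \<in> leaves dl" using canon_leaves_ne[OF cdl] by blast
  have wdk: "w \<notin> leaves dk" using same_child[OF can dl(1) dk w] dl(2) by blast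
  have wu: "w \<in> leaves ?u" using leaves_child[OF dl(1)] w by blast
  have wN: "w \<in> NN ?u x" unfolding NNu using wu wdk by blast
  have e1: "NN dk x = {}"
  proof (rule ccontr)
    assume "NN dk x \<noteq> {}"
    then obtain z where z: "z \<in> NN dk x" by blast
    then have zN: "z \<in> NN ?u x" unfolding NNu by blast
    have zk: "z \<in> leaves dk" using z by blast
    have "z \<noteq> w" using zk wdk by blast
    then have "cadj ?u z w" using clq[OF zN wN] by blast
    moreover have "\<not> cadj ?u z w" using cadj_diff[OF can dk dl(1) dl(2)[symmetric] zk w] by simp
    ultimately show False by simp
  qed
  have e2: "set ds \<subseteq> {dk, dl}"
  proof
    fix d' assume d': "d' \<in> set ds"
    show "d' \<in> {dk, dl}"
    proof (rule ccontr)
      assume nd: "d' \<notin> {dk, dl}"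
      have "canonical_cotree d'" using can d' by simp
      then obtain w' where w': "w' \<in> leaves d'" using canon_leaves_ne by blast
      have w'dk: "w' \<notin> leaves dk" using same_child[OF can d' dk w'] nd by blast
      have w'u: "w' \<in> leaves ?u" using leaves_child[OF d'] w' by blast
      have w'N: "w' \<in> NN ?u x" unfolding NNu using w'u w'dk by blast
      have "w' \<noteq> w" using same_child[OF can d' dl(1) w'] w nd by blast
      then have "cadj ?u w w'" using clq[OF wN w'N] by blast
      moreover have "\<not> cadj ?u w w'"
      proof -
        have "dl \<noteq> d'" using nd by blast
        then show ?thesis using cadj_diff[OF can dl(1) d' _ w w'] by simp
      qed
      ultimately show False by simp
    qed
  qed
  have "leaves dl \<subseteq> NN ?u x"
  proof
    fix v assume v: "v \<in> leaves dl"
    have "v \<notin> leaves dk" using same_child[OF can dl(1) dk v] dl(2) by blast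
    moreover have "v \<in> leaves ?u" using leaves_child[OF dl(1)] v by blast
    ultimately show "v \<in> NN ?u x" unfolding NNu by blast
  qed
  then have "is_clique (leaves ?u) (cadj ?u) (leaves dl)" using cl clique_mono by blast
  then have "is_clique (leaves dl) (cadj dl) (leaves dl)" using clique_sub[OF can dl(1)] by blast
  moreover have "set ds = {dk, dl}" using e2 dk dl(1) by blast
  ultimately show ?thesis using e1 dl(2) by blast
qed

lemma two_list: "distinct ds \<Longrightarrow> set ds = {a, b} \<Longrightarrow> a \<noteq> b \<Longrightarrow> ds = [a, b] \<or> ds = [b, a]"
proof -
  assume h: "distinct ds" "set ds = {a, b}" "a \<noteq> b"
  then have "length ds = 2" using distinct_card by fastforce
  then obtain p q where "ds = [p, q]"
    by (auto simp: length_Suc_conv numeral_2_eq_2)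
  then show ?thesis using h by (auto simp: doubleton_eq_iff)
qed


lemma gamma1_iff:
  assumes "canonical_cotree d"
  shows "gamma_T d = 1 \<longleftrightarrow> (\<exists>v\<in>leaves d. NN d v = {})"
proof -
  have "gamma_T d = 1 \<longleftrightarrow> (\<exists>v\<in>leaves d. \<forall>z\<in>leaves d. z \<noteq> v \<longrightarrow> cadj d z v)"
    by (rule dom_number_1[OF finite_leaves canon_leaves_ne[OF assms]])
  also have "\<dots> \<longleftrightarrow> (\<exists>v\<in>leaves d. NN d v = {})"
    by (auto simp: closed_nbhd_def cadj_sym[of d _])
  finally show ?thesis .
qed

lemma gammas1_iff:
  assumes "canonical_cotree d"
  shows "gamma_s_T d = 1 \<longleftrightarrow> is_clique (leaves d) (cadj d) (leaves d)"
proof -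
  have "gamma_s_T d = 1 \<longleftrightarrow> (\<forall>x\<in>leaves d. \<forall>z\<in>leaves d. z \<noteq> x \<longrightarrow> cadj d z x)"
    by (rule secdom_number_1[OF finite_leaves canon_leaves_ne[OF assms]])
  also have "\<dots> \<longleftrightarrow> is_clique (leaves d) (cadj d) (leaves d)"
    unfolding is_clique_def by blast
  finally show ?thesis .
qed

lemma goodv_char:
  assumes can: "canonical_cotree t" and nj: "\<not> is_join_node t"
  shows "(\<exists>x\<in>leaves t. is_clique (leaves t) (cadj t) (NN t x)) \<longleftrightarrow> is_leaf t \<or> label_R t"
proof (cases t)
  case (Leaf v)
  then show ?thesis by (auto simp: is_clique_def closed_nbhd_def)
next
  case (Node b ds)
  with nj have t: "t = Node False ds" by simp
  have can': "canonical_cotree (Node False ds)" using can t by simp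
  have dist: "distinct ds" using canon_distinct[OF can'] .
  show ?thesis
  proof
    assume "\<exists>x\<in>leaves t. is_clique (leaves t) (cadj t) (NN t x)"
    then obtain x where x: "x \<in> leaves t" "is_clique (leaves t) (cadj t) (NN t x)" by blast
    then obtain dk where dk: "dk \<in> set ds" "x \<in> leaves dk" using t by auto
    from union_good[OF can' dk] x t obtain dl where
      dl: "set ds = {dk, dl}" "dl \<noteq> dk" "NN dk x = {}" "is_clique (leaves dl) (cadj dl) (leaves dl)"
      by auto
    have cdk: "canonical_cotree dk" using can' dk by simp
    have cdl: "canonical_cotree dl" using can' dl by simp
    have g1: "gamma_T dk = 1" using gamma1_iff[OF cdk] dl dk by blast
    have g2: "gamma_s_T dl = 1" using gammas1_iff[OF cdl] dl by blast
    have "ds = [dk, dl] \<or> ds = [dl, dk]" using two_list[OF dist dl(1)] dl(2) by auto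
    then have "label_R t"
    proof
      assume "ds = [dk, dl]"
      then have "gamma_T (ds!0) = 1 \<and> gamma_s_T (ds!1) = 1" using g1 g2 by simp
      then have "\<exists>i<2. \<exists>j<2. i \<noteq> j \<and> gamma_T (ds ! i) = 1 \<and> gamma_s_T (ds ! j) = 1"
        by (intro exI[of _ "0::nat"] conjI exI[of _ "1::nat"]) simp_all
      then show ?thesis unfolding label_R_def using t \<open>ds = [dk, dl]\<close> by simp
    next
      assume "ds = [dl, dk]"
      then have "gamma_T (ds!1) = 1 \<and> gamma_s_T (ds!0) = 1" using g1 g2 by simp
      then have "\<exists>i<2. \<exists>j<2. i \<noteq> j \<and> gamma_T (ds ! i) = 1 \<and> gamma_s_T (ds ! j) = 1"
        by (intro exI[of _ "1::nat"] conjI exI[of _ "0::nat"]) simp_all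
      then show ?thesis unfolding label_R_def using t \<open>ds = [dl, dk]\<close> by simp
    qed
    then show "is_leaf t \<or> label_R t" by simp
  next
    assume "is_leaf t \<or> label_R t"
    then have R: "label_R t" using t by simp
    then obtain i j where ij: "i < 2" "j < 2" "i \<noteq> j" "gamma_T (ds ! i) = 1" "gamma_s_T (ds ! j) = 1"
      and len: "length ds = 2"
      unfolding label_R_def using t by auto
    let ?dk = "ds ! i" and ?dl = "ds ! j"
    have dk: "?dk \<in> set ds" and dl: "?dl \<in> set ds" using ij len by auto
    have ne: "?dk \<noteq> ?dl" using dist ij len by (simp add: nth_eq_iff_index_eq)
    have sds: "set ds = {?dk, ?dl}"
    proof -
      have "{i, j} = {0, 1}" using ij by auto
      moreover have "set ds = {ds ! 0, ds ! 1}" using len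
        by (metis (no_types, lifting) One_nat_def Suc_1 empty_set length_0_conv length_Suc_conv list.simps(15)
            nth_Cons_0 nth_Cons_Suc)
      ultimately show ?thesis by (metis doubleton_eq_iff)
    qed
    have cdk: "canonical_cotree ?dk" using can' dk by simp
    have cdl: "canonical_cotree ?dl" using can' dl by simp
    obtain v where v: "v \<in> leaves ?dk" "NN ?dk v = {}" using gamma1_iff[OF cdk] ij by blast
    have cl: "is_clique (leaves ?dl) (cadj ?dl) (leaves ?dl)" using gammas1_iff[OF cdl] ij by blast
    have "NN t v = leaves ?dl"
      using NN_node[OF can' dk v(1)] v(2) t sds canon_disj[OF can' dk dl ne] by auto
    moreover have "is_clique (leaves t) (cadj t) (leaves ?dl)"
      using clique_sub[OF can' dl] cl t by simp
    ultimately have "is_clique (leaves t) (cadj t) (NN t v)" by simp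
    moreover have "v \<in> leaves t" using leaves_child[OF dk] v(1) t by blast
    ultimately show "\<exists>x\<in>leaves t. is_clique (leaves t) (cadj t) (NN t x)" by blast
  qed
qed

lemma two_cliques_good:
  assumes "two_cliques_union V adj"
  shows "\<exists>x\<in>V. \<exists>y\<in>V. x \<noteq> y \<and> dominating V adj {x, y} \<and>
     is_clique V adj (V - closed_nbhd V adj x) \<and> is_clique V adj (V - closed_nbhd V adj y)"
proof -
  obtain A B where AB: "A \<noteq> {}" "B \<noteq> {}" "A \<inter> B = {}" "A \<union> B = V"
    "is_clique V adj A" "is_clique V adj B" "\<forall>a \<in> A. \<forall>b \<in> B. \<not> adj a b"
    using assms unfolding two_cliques_union_def by blast
  have cA: "\<And>p q. p \<in> A \<Longrightarrow> q \<in> A \<Longrightarrow> p \<noteq> q \<Longrightarrow> adj p q" using AB(5) unfolding is_clique_def by blast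
  have cB: "\<And>p q. p \<in> B \<Longrightarrow> q \<in> B \<Longrightarrow> p \<noteq> q \<Longrightarrow> adj p q" using AB(6) unfolding is_clique_def by blast
  obtain a where a: "a \<in> A" using AB(1) by blast
  obtain b where b: "b \<in> B" using AB(2) by blast
  have ab: "a \<noteq> b" using a b AB(3) by blast
  have aV: "a \<in> V" and bV: "b \<in> V" using a b AB(4) by blast+
  have dom: "dominating V adj {a, b}"
    unfolding dominating_def
  proof (intro conjI ballI)
    show "{a, b} \<subseteq> V" using aV bV by blast
    fix z assume z: "z \<in> V - {a, b}"
    show "\<exists>y\<in>{a, b}. adj z y"
    proof (cases "z \<in> A")
      case True then show ?thesis using cA[OF True a] z by blast
    next
      case False then have "z \<in> B" using z AB(4) by blast
      then show ?thesis using cB[OF _ b] z by blast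
    qed
  qed
  have sa: "V - closed_nbhd V adj a \<subseteq> B"
  proof
    fix z assume z: "z \<in> V - closed_nbhd V adj a"
    then have "z \<noteq> a" "\<not> adj a z" "z \<in> V" unfolding closed_nbhd_def by auto
    then show "z \<in> B" using cA[OF a] AB(4) by blast
  qed
  have sb: "V - closed_nbhd V adj b \<subseteq> A"
  proof
    fix z assume z: "z \<in> V - closed_nbhd V adj b"
    then have "z \<noteq> b" "\<not> adj b z" "z \<in> V" unfolding closed_nbhd_def by auto
    then show "z \<in> A" using cB[OF b] AB(4) by blast
  qed
  have "is_clique V adj (V - closed_nbhd V adj a)" using clique_mono[OF AB(6) sa] .
  moreover have "is_clique V adj (V - closed_nbhd V adj b)" using clique_mono[OF AB(5) sb] .
  ultimately show ?thesis using aV bV ab dom by blast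
qed

lemma twoin_char:
  assumes can: "canonical_cotree t" and nj: "\<not> is_join_node t"
  shows "(\<exists>x\<in>leaves t. \<exists>y\<in>leaves t. x \<noteq> y \<and> dominating (leaves t) (cadj t) {x, y} \<and>
            is_clique (leaves t) (cadj t) (NN t x) \<and> is_clique (leaves t) (cadj t) (NN t y))
    \<longleftrightarrow> label_R t \<and> two_cliques_union (leaves t) (cadj t)"
proof (cases t)
  case (Leaf v)
  then show ?thesis by (auto simp: label_R_def)
next
  case (Node b ds)
  with nj have t: "t = Node False ds" by simp
  have can': "canonical_cotree (Node False ds)" using can t by simp
  show ?thesis
  proof
    assume "\<exists>x\<in>leaves t. \<exists>y\<in>leaves t. x \<noteq> y \<and> dominating (leaves t) (cadj t) {x, y} \<and>
            is_clique (leaves t) (cadj t) (NN t x) \<and> is_clique (leaves t) (cadj t) (NN t y)"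
    then obtain x y where xy: "x \<in> leaves t" "y \<in> leaves t" "x \<noteq> y" "dominating (leaves t) (cadj t) {x, y}"
      "is_clique (leaves t) (cadj t) (NN t x)" "is_clique (leaves t) (cadj t) (NN t y)" by blast
    have "is_leaf t \<or> label_R t" using goodv_char[OF can nj] xy(1,5) by blast
    then have R: "label_R t" using t by simp
    obtain dk where dk: "dk \<in> set ds" "x \<in> leaves dk" using t xy by auto
    obtain dl where dl: "dl \<in> set ds" "y \<in> leaves dl" using t xy by auto
    from union_good[OF can' dk] xy t obtain dl' where
      dl': "set ds = {dk, dl'}" "dl' \<noteq> dk" "NN dk x = {}" "is_clique (leaves dl') (cadj dl') (leaves dl')"
      by auto
    have "dl \<noteq> dk"
    proof
      assume eq: "dl = dk"
      have "dl' \<in> set ds" using dl' by auto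
      then have "canonical_cotree dl'" using can' by simp
      then obtain w where w: "w \<in> leaves dl'" using canon_leaves_ne by blast
      have "w \<notin> leaves dk" using canon_disj[OF can' dk(1), of dl'] dl' w by auto
      then have "w \<in> leaves t - {x, y}" using w \<open>dl' \<in> set ds\<close> t dk dl eq by auto
      then obtain z where "z \<in> {x, y}" "cadj t w z" using xy(4) unfolding dominating_def by blast
      moreover have "z \<in> leaves dk" using \<open>z \<in> {x, y}\<close> dk dl eq by auto
      ultimately show False
        using cadj_diff[OF can' \<open>dl' \<in> set ds\<close> dk(1) dl'(2) w] t by simp
    qed
    then have dleq: "dl = dl'" using dl dl' by auto
    from union_good[OF can' dl] xy t obtain dk' where
      dk': "set ds = {dl, dk'}" "dk' \<noteq> dl" "NN dl y = {}" "is_clique (leaves dk') (cadj dk') (leaves dk')"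
      by auto
    have dkeq: "dk' = dk" using dk' dl' dleq \<open>dl \<noteq> dk\<close> by (metis doubleton_eq_iff)
    have "two_cliques_union (leaves t) (cadj t)"
      unfolding two_cliques_union_def
    proof (intro exI conjI)
      show "leaves dk \<noteq> {}" "leaves dl \<noteq> {}" using dk dl by auto
      show "leaves dk \<inter> leaves dl = {}" using canon_disj[OF can' dk(1) dl(1)] \<open>dl \<noteq> dk\<close> by auto
      show "leaves dk \<union> leaves dl = leaves t" using t dl' dleq by auto
      show "is_clique (leaves t) (cadj t) (leaves dk)" using clique_sub[OF can' dk(1)] dk' dkeq t by simp
      show "is_clique (leaves t) (cadj t) (leaves dl)" using clique_sub[OF can' dl(1)] dl' dleq t by simp
      show "\<forall>a\<in>leaves dk. \<forall>b\<in>leaves dl. \<not> cadj t a b"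
        using cadj_diff[OF can' dk(1) dl(1)] \<open>dl \<noteq> dk\<close> t by auto
    qed
    with R show "label_R t \<and> two_cliques_union (leaves t) (cadj t)" by simp
  next
    assume "label_R t \<and> two_cliques_union (leaves t) (cadj t)"
    then show "\<exists>x\<in>leaves t. \<exists>y\<in>leaves t. x \<noteq> y \<and> dominating (leaves t) (cadj t) {x, y} \<and>
            is_clique (leaves t) (cadj t) (NN t x) \<and> is_clique (leaves t) (cadj t) (NN t y)"
      using two_cliques_good by blast
  qed
qed


lemma main_iff:
  assumes can: "canonical_cotree (Node True cs)"
  shows "(\<exists>x\<in>leaves (Node True cs). \<exists>y\<in>leaves (Node True cs). x \<noteq> y \<and>
            dominating (leaves (Node True cs)) (cadj (Node True cs)) {x, y} \<and>
            is_clique (leaves (Node True cs)) (cadj (Node True cs)) (NN (Node True cs) x) \<and>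
            is_clique (leaves (Node True cs)) (cadj (Node True cs)) (NN (Node True cs) y))
    \<longleftrightarrow> (\<exists>ci\<in>set cs. \<exists>cj\<in>set cs. ci \<noteq> cj \<and>
            (\<exists>x\<in>leaves ci. is_clique (leaves ci) (cadj ci) (NN ci x)) \<and>
            (\<exists>y\<in>leaves cj. is_clique (leaves cj) (cadj cj) (NN cj y)))
      \<or> (\<exists>ci\<in>set cs. \<exists>x\<in>leaves ci. \<exists>y\<in>leaves ci. x \<noteq> y \<and> dominating (leaves ci) (cadj ci) {x, y} \<and>
            is_clique (leaves ci) (cadj ci) (NN ci x) \<and> is_clique (leaves ci) (cadj ci) (NN ci y))"
    (is "?L \<longleftrightarrow> ?R1 \<or> ?R2")
proof -
  let ?c = "Node True cs"
  have NNc: "\<And>ci x. ci \<in> set cs \<Longrightarrow> x \<in> leaves ci \<Longrightarrow> NN ?c x = NN ci x"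
    using NN_node[OF can] by simp
  have clq: "\<And>ci x. ci \<in> set cs \<Longrightarrow> x \<in> leaves ci \<Longrightarrow>
      is_clique (leaves ?c) (cadj ?c) (NN ?c x) \<longleftrightarrow> is_clique (leaves ci) (cadj ci) (NN ci x)"
    using NNc clique_sub[OF can] by (metis Diff_subset)
  show ?thesis
  proof
    assume ?L
    then obtain x y where xy: "x \<in> leaves ?c" "y \<in> leaves ?c" "x \<noteq> y" "dominating (leaves ?c) (cadj ?c) {x, y}"
      "is_clique (leaves ?c) (cadj ?c) (NN ?c x)" "is_clique (leaves ?c) (cadj ?c) (NN ?c y)" by blast
    obtain ci where ci: "ci \<in> set cs" "x \<in> leaves ci" using xy by auto
    obtain cj where cj: "cj \<in> set cs" "y \<in> leaves cj" using xy by auto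
    have cx: "is_clique (leaves ci) (cadj ci) (NN ci x)" using clq[OF ci] xy by simp
    have cy: "is_clique (leaves cj) (cadj cj) (NN cj y)" using clq[OF cj] xy by simp
    show "?R1 \<or> ?R2"
    proof (cases "ci = cj")
      case False
      then show ?thesis using ci cj cx cy by blast
    next
      case True
      have "dominating (leaves ci) (cadj ci) {x, y}"
        unfolding dominating_def
      proof (intro conjI ballI)
        show "{x, y} \<subseteq> leaves ci" using ci cj True by auto
        fix z assume z: "z \<in> leaves ci - {x, y}"
        then have "z \<in> leaves ?c - {x, y}" using ci by auto
        then obtain w where "w \<in> {x, y}" "cadj ?c z w" using xy(4) unfolding dominating_def by blast
        moreover have "w \<in> leaves ci" using \<open>w \<in> {x, y}\<close> ci cj True by auto
        ultimately show "\<exists>w\<in>{x, y}. cadj ci z w" using cadj_same[OF can ci(1)] z by blast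
      qed
      then show ?thesis using ci cj True cx cy xy(3) by blast
    qed
  next
    assume "?R1 \<or> ?R2"
    then show ?L
    proof
      assume ?R1
      then obtain ci cj x y where h: "ci \<in> set cs" "cj \<in> set cs" "ci \<noteq> cj" "x \<in> leaves ci" "y \<in> leaves cj"
        "is_clique (leaves ci) (cadj ci) (NN ci x)" "is_clique (leaves cj) (cadj cj) (NN cj y)" by blast
      have "x \<noteq> y" using canon_disj[OF can h(1,2,3)] h by auto
      moreover have "dominating (leaves ?c) (cadj ?c) {x, y}"
        unfolding dominating_def
      proof (intro conjI ballI)
        show "{x, y} \<subseteq> leaves ?c" using h by auto
        fix z assume z: "z \<in> leaves ?c - {x, y}"
        then obtain ck where ck: "ck \<in> set cs" "z \<in> leaves ck" by auto
        show "\<exists>w\<in>{x, y}. cadj ?c z w"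
        proof (cases "ck = ci")
          case True
          then have "ck \<noteq> cj" using h by simp
          then show ?thesis using cadj_diff[OF can ck(1) h(2) _ ck(2) h(5)] by auto
        next
          case False
          then show ?thesis using cadj_diff[OF can ck(1) h(1) _ ck(2) h(4)] by auto
        qed
      qed
      ultimately show ?L using h clq by auto
    next
      assume ?R2
      then obtain ci x y where h: "ci \<in> set cs" "x \<in> leaves ci" "y \<in> leaves ci" "x \<noteq> y"
        "dominating (leaves ci) (cadj ci) {x, y}"
        "is_clique (leaves ci) (cadj ci) (NN ci x)" "is_clique (leaves ci) (cadj ci) (NN ci y)" by blast
      have "dominating (leaves ?c) (cadj ?c) {x, y}"
        unfolding dominating_def
      proof (intro conjI ballI)
        show "{x, y} \<subseteq> leaves ?c" using h by auto
        fix z assume z: "z \<in> leaves ?c - {x, y}"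
        then obtain ck where ck: "ck \<in> set cs" "z \<in> leaves ck" by auto
        show "\<exists>w\<in>{x, y}. cadj ?c z w"
        proof (cases "ck = ci")
          case True
          then have "z \<in> leaves ci - {x, y}" using z ck by auto
          then obtain w where "w \<in> {x, y}" "cadj ci z w" using h(5) unfolding dominating_def by blast
          moreover have "w \<in> leaves ci" using \<open>w \<in> {x, y}\<close> h by auto
          ultimately show ?thesis using cadj_same[OF can h(1)] \<open>z \<in> leaves ci - {x, y}\<close> by blast
        next
          case False
          then show ?thesis using cadj_diff[OF can ck(1) h(1) _ ck(2) h(2)] by auto
        qed
      qed
      then show ?L using h clq by auto
    qed
  qed
qed

theorem lemma3:
  fixes T c :: "'a cotree"
  assumes "canonical_cotree T"
    and "c \<in> subtrees T"
    and "is_join_node c"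
  shows "property_P (leaves c) (cadj c) \<longleftrightarrow>
    (length (children c) \<ge> 2 \<and>
     ((\<exists>i < length (children c). \<exists>j < length (children c). i \<noteq> j \<and>
          (is_leaf (children c ! i) \<or> label_R (children c ! i)) \<and>
          (is_leaf (children c ! j) \<or> label_R (children c ! j)))
      \<or> (\<exists>u \<in> set (children c). label_R u \<and> two_cliques_union (leaves u) (cadj u))))"
proof -
  obtain cs where c: "c = Node True cs" using assms(3) by (cases c) auto
  have can: "canonical_cotree (Node True cs)" using canon_sub[OF assms(1,2)] c by simp
  have dist: "distinct cs" using canon_distinct[OF can] .
  have len: "length cs \<ge> 2" using can by simp
  have ch: "\<And>ci. ci \<in> set cs \<Longrightarrow> canonical_cotree ci \<and> \<not> is_join_node ci"
  proof -
    fix ci assume "ci \<in> set cs"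
    then have "canonical_cotree ci \<and> (is_leaf ci \<or> \<not> is_join_node ci)" using can by simp
    then show "canonical_cotree ci \<and> \<not> is_join_node ci" by (cases ci) auto
  qed
  have join: "is_join_of_cographs (leaves c) (cadj c)"
    unfolding is_join_of_cographs_def
  proof (intro exI conjI)
    show "2 \<le> length (map leaves cs)" using len by simp
    show "\<Union>(set (map leaves cs)) = leaves c" using c by simp
    show "\<forall>i<length (map leaves cs). map leaves cs ! i \<noteq> {} \<and> cograph (map leaves cs ! i) (cadj c)"
    proof (intro allI impI conjI)
      fix i assume i: "i < length (map leaves cs)"
      then have ci: "cs ! i \<in> set cs" by simp
      then have cc: "canonical_cotree (cs ! i)" using can by simp
      show "map leaves cs ! i \<noteq> {}" using canon_leaves_ne[OF cc] i by simp
      have "cograph (leaves (cs ! i)) (cadj (Node True cs))"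
        using cograph_transfer[OF canon_cograph[OF cc] agree_child[OF can ci]] .
      then show "cograph (map leaves cs ! i) (cadj c)" using i c by simp
    qed
    show "\<forall>i<length (map leaves cs). \<forall>j<length (map leaves cs). i \<noteq> j \<longrightarrow> map leaves cs ! i \<inter> map leaves cs ! j = {}"
      using can by simp
    show "\<forall>i<length (map leaves cs). \<forall>j<length (map leaves cs). i \<noteq> j \<longrightarrow>
        (\<forall>x\<in>map leaves cs ! i. \<forall>y\<in>map leaves cs ! j. cadj c x y)"
      using cadj_idx[OF can] c by simp
  qed
  have ce: "\<And>V adj C. (C = {} \<or> is_clique V adj C) \<longleftrightarrow> is_clique V adj C"
    unfolding is_clique_def by blast
  have P: "property_P (leaves c) (cadj c) \<longleftrightarrow>
     (\<exists>x\<in>leaves c. \<exists>y\<in>leaves c. x \<noteq> y \<and> dominating (leaves c) (cadj c) {x, y} \<and>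
            is_clique (leaves c) (cadj c) (NN c x) \<and> is_clique (leaves c) (cadj c) (NN c y))"
    unfolding property_P_def ce using join by (simp only: simp_thms)
  have idx: "\<And>Q. (\<exists>i<length cs. \<exists>j<length cs. i \<noteq> j \<and> Q (cs ! i) \<and> Q (cs ! j)) \<longleftrightarrow>
      (\<exists>a\<in>set cs. \<exists>b\<in>set cs. a \<noteq> b \<and> Q a \<and> Q b)"
  proof
    fix Q :: "'a cotree \<Rightarrow> bool"
    assume "\<exists>i<length cs. \<exists>j<length cs. i \<noteq> j \<and> Q (cs ! i) \<and> Q (cs ! j)"
    then obtain i j where ij: "i < length cs" "j < length cs" "i \<noteq> j" "Q (cs ! i)" "Q (cs ! j)" by blast
    have "cs ! i \<noteq> cs ! j" using dist ij(1-3) by (simp add: nth_eq_iff_index_eq)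
    then show "\<exists>a\<in>set cs. \<exists>b\<in>set cs. a \<noteq> b \<and> Q a \<and> Q b"
      using ij nth_mem[OF ij(1)] nth_mem[OF ij(2)] by blast
  next
    fix Q :: "'a cotree \<Rightarrow> bool"
    assume "\<exists>a\<in>set cs. \<exists>b\<in>set cs. a \<noteq> b \<and> Q a \<and> Q b"
    then obtain a b where ab: "a \<in> set cs" "b \<in> set cs" "a \<noteq> b" "Q a" "Q b" by blast
    obtain i where i: "i < length cs" "cs ! i = a" using ab(1) by (meson in_set_conv_nth)
    obtain j where j: "j < length cs" "cs ! j = b" using ab(2) by (meson in_set_conv_nth)
    have "i \<noteq> j" using i j ab(3) by blast
    then show "\<exists>i<length cs. \<exists>j<length cs. i \<noteq> j \<and> Q (cs ! i) \<and> Q (cs ! j)"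
      using i j ab by blast
  qed
  have g: "\<And>ci. ci \<in> set cs \<Longrightarrow> (\<exists>x\<in>leaves ci. is_clique (leaves ci) (cadj ci) (NN ci x)) \<longleftrightarrow> is_leaf ci \<or> label_R ci"
  proof -
    fix ci assume "ci \<in> set cs"
    then have "canonical_cotree ci" "\<not> is_join_node ci" using ch by blast+
    then show "(\<exists>x\<in>leaves ci. is_clique (leaves ci) (cadj ci) (NN ci x)) \<longleftrightarrow> is_leaf ci \<or> label_R ci"
      by (rule goodv_char)
  qed
  have tw: "\<And>ci. ci \<in> set cs \<Longrightarrow> (\<exists>x\<in>leaves ci. \<exists>y\<in>leaves ci. x \<noteq> y \<and> dominating (leaves ci) (cadj ci) {x, y} \<and>
            is_clique (leaves ci) (cadj ci) (NN ci x) \<and> is_clique (leaves ci) (cadj ci) (NN ci y))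
       \<longleftrightarrow> label_R ci \<and> two_cliques_union (leaves ci) (cadj ci)"
  proof -
    fix ci assume "ci \<in> set cs"
    then have "canonical_cotree ci" "\<not> is_join_node ci" using ch by blast+
    then show "(\<exists>x\<in>leaves ci. \<exists>y\<in>leaves ci. x \<noteq> y \<and> dominating (leaves ci) (cadj ci) {x, y} \<and>
            is_clique (leaves ci) (cadj ci) (NN ci x) \<and> is_clique (leaves ci) (cadj ci) (NN ci y))
       \<longleftrightarrow> label_R ci \<and> two_cliques_union (leaves ci) (cadj ci)"
      by (rule twoin_char)
  qed
  have r1: "(\<exists>ci\<in>set cs. \<exists>cj\<in>set cs. ci \<noteq> cj \<and>
            (\<exists>x\<in>leaves ci. is_clique (leaves ci) (cadj ci) (NN ci x)) \<and>
            (\<exists>y\<in>leaves cj. is_clique (leaves cj) (cadj cj) (NN cj y)))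
        \<longleftrightarrow> (\<exists>a\<in>set cs. \<exists>b\<in>set cs. a \<noteq> b \<and> (is_leaf a \<or> label_R a) \<and> (is_leaf b \<or> label_R b))"
  proof
    assume "\<exists>ci\<in>set cs. \<exists>cj\<in>set cs. ci \<noteq> cj \<and>
            (\<exists>x\<in>leaves ci. is_clique (leaves ci) (cadj ci) (NN ci x)) \<and>
            (\<exists>y\<in>leaves cj. is_clique (leaves cj) (cadj cj) (NN cj y))"
    then obtain ci cj where h: "ci \<in> set cs" "cj \<in> set cs" "ci \<noteq> cj"
      "\<exists>x\<in>leaves ci. is_clique (leaves ci) (cadj ci) (NN ci x)"
      "\<exists>y\<in>leaves cj. is_clique (leaves cj) (cadj cj) (NN cj y)" by blast
    have "is_leaf ci \<or> label_R ci" using g[OF h(1)] h(4) by blast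
    moreover have "is_leaf cj \<or> label_R cj" using g[OF h(2)] h(5) by blast
    ultimately show "\<exists>a\<in>set cs. \<exists>b\<in>set cs. a \<noteq> b \<and> (is_leaf a \<or> label_R a) \<and> (is_leaf b \<or> label_R b)"
      using h(1-3) by blast
  next
    assume "\<exists>a\<in>set cs. \<exists>b\<in>set cs. a \<noteq> b \<and> (is_leaf a \<or> label_R a) \<and> (is_leaf b \<or> label_R b)"
    then obtain ci cj where h: "ci \<in> set cs" "cj \<in> set cs" "ci \<noteq> cj"
      "is_leaf ci \<or> label_R ci" "is_leaf cj \<or> label_R cj" by blast
    have "\<exists>x\<in>leaves ci. is_clique (leaves ci) (cadj ci) (NN ci x)" using g[OF h(1)] h(4) by blast
    moreover have "\<exists>y\<in>leaves cj. is_clique (leaves cj) (cadj cj) (NN cj y)" using g[OF h(2)] h(5) by blast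
    ultimately show "\<exists>ci\<in>set cs. \<exists>cj\<in>set cs. ci \<noteq> cj \<and>
            (\<exists>x\<in>leaves ci. is_clique (leaves ci) (cadj ci) (NN ci x)) \<and>
            (\<exists>y\<in>leaves cj. is_clique (leaves cj) (cadj cj) (NN cj y))"
      using h(1-3) by blast
  qed
  have r2: "(\<exists>ci\<in>set cs. \<exists>x\<in>leaves ci. \<exists>y\<in>leaves ci. x \<noteq> y \<and> dominating (leaves ci) (cadj ci) {x, y} \<and>
            is_clique (leaves ci) (cadj ci) (NN ci x) \<and> is_clique (leaves ci) (cadj ci) (NN ci y))
      \<longleftrightarrow> (\<exists>u\<in>set cs. label_R u \<and> two_cliques_union (leaves u) (cadj u))"
  proof
    assume "\<exists>ci\<in>set cs. \<exists>x\<in>leaves ci. \<exists>y\<in>leaves ci. x \<noteq> y \<and> dominating (leaves ci) (cadj ci) {x, y} \<and>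
            is_clique (leaves ci) (cadj ci) (NN ci x) \<and> is_clique (leaves ci) (cadj ci) (NN ci y)"
    then obtain ci where ci: "ci \<in> set cs" "\<exists>x\<in>leaves ci. \<exists>y\<in>leaves ci. x \<noteq> y \<and> dominating (leaves ci) (cadj ci) {x, y} \<and>
            is_clique (leaves ci) (cadj ci) (NN ci x) \<and> is_clique (leaves ci) (cadj ci) (NN ci y)" by blast
    then show "\<exists>u\<in>set cs. label_R u \<and> two_cliques_union (leaves u) (cadj u)"
      using tw[OF ci(1)] by blast
  next
    assume "\<exists>u\<in>set cs. label_R u \<and> two_cliques_union (leaves u) (cadj u)"
    then obtain ci where ci: "ci \<in> set cs" "label_R ci \<and> two_cliques_union (leaves ci) (cadj ci)" by blast
    then show "\<exists>ci\<in>set cs. \<exists>x\<in>leaves ci. \<exists>y\<in>leaves ci. x \<noteq> y \<and> dominating (leaves ci) (cadj ci) {x, y} \<and>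
            is_clique (leaves ci) (cadj ci) (NN ci x) \<and> is_clique (leaves ci) (cadj ci) (NN ci y)"
      using tw[OF ci(1)] by blast
  qed
  have "property_P (leaves c) (cadj c) \<longleftrightarrow>
      (\<exists>a\<in>set cs. \<exists>b\<in>set cs. a \<noteq> b \<and> (is_leaf a \<or> label_R a) \<and> (is_leaf b \<or> label_R b))
      \<or> (\<exists>u\<in>set cs. label_R u \<and> two_cliques_union (leaves u) (cadj u))"
    unfolding P unfolding c main_iff[OF can] r1 r2 ..
  then show ?thesis
    unfolding c children.simps idx[of "\<lambda>a. is_leaf a \<or> label_R a"] using len by (simp only: simp_thms le_refl)
qed

end
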